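(* Let $\mathsf{\Sigma}\in\mathbb{R}^{N\times N_S}$ and $\mathsf{\Lambda}\in\mathbb{R}^{N\times N_L}$ be the Star-to-RWG and Loop-to-RWG matrices of a triangular surface mesh (so that $\mathsf{\Sigma}^{\mathrm T}\mathsf{\Lambda}=\mathsf{0}$), with $\mathsf{P}^\Sigma=\mathsf{\Sigma}(\mathsf{\Sigma}^{\mathrm T}\mathsf{\Sigma})^+\mathsf{\Sigma}^{\mathrm T}$, $\mathbb{P}^\Lambda=\mathsf{\Lambda}(\mathsf{\Lambda}^{\mathrm T}\mathsf{\Lambda})^+\mathsf{\Lambda}^{\mathrm T}$, and quasi-Helmholtz Laplacian filters $\mathsf{P}_n^\Sigma=\mathsf{\Sigma}((\mathsf{\Sigma}^{\mathrm T}\mathsf{\Sigma})_n)^+\mathsf{\Sigma}^{\mathrm T}$, $\mathbb{P}_n^\Lambda=\mathsf{\Lambda}((\mathsf{\Lambda}^{\mathrm T}\mathsf{\Lambda})_n)^+\mathsf{\Lambda}^{\mathrm T}$, $\mathsf{P}_n^{\Lambda H}=\mathbb{P}_n^\Lambda+\mathsf{I}-\mathsf{P}^\Sigma-\mathbb{P}^\Lambda$, $\mathbb{P}_n^{\Sigma H}=\mathsf{P}_n^\Sigma+\mathsf{I}-\mathbb{P}^\Lambda-\mathsf{P}^\Sigma$. Then for all integers $1\le m<n<p<q\le N_S$, $$(\mathsf{P}_m^\Sigma-\mathsf{P}_n^\Sigma)(\mathsf{P}_p^\Sigma-\mathsf{P}_q^\Sigma)=\mathsf{0},\qquad (\mathbb{P}_m^{\Sigma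 H}-\mathbb{P}_n^{\Sigma H})(\mathbb{P}_p^{\Sigma H}-\mathbb{P}_q^{\Sigma H})=\mathsf{0},$$ and for all integers $1\le m<n<p<q\le N_L$, $$(\mathbb{P}_m^\Lambda-\mathbb{P}_n^\Lambda)(\mathbb{P}_p^\Lambda-\mathbb{P}_q^\Lambda)=\mathsf{0},\qquad (\mathsf{P}_m^{\Lambda H}-\mathsf{P}_n^{\Lambda H})(\mathsf{P}_p^{\Lambda H}-\mathsf{P}_q^{\Lambda H})=\mathsf{0}.$$
   Context: Consider a closed triangulated surface with $N$ edges, $N_S$ triangles and $N_L$ vertices; $\mathsf{I}$ is the $N\times N$ identity. Each edge $m$ is shared by two triangles $c_m^+$, $c_m^-$. $[\mathsf{\Sigma}]_{mn}=1$ if cell $n$ is $c_m^+$, $-1$ if cell $n$ is $c_m^-$, $0$ otherwise. $[\mathsf{\Lambda}]_{mn}=\pm1$ when vertex $n$ is an endpoint of edge $m$ (opposite signs for the two endpoints, fixed by the orientation convention of the RWG functions), $0$ otherwise; with this convention $\mathsf{\Sigma}^{\mathrm T}\mathsf{\Lambda}=\mathsf{0}$. $^+$ denotes the Moore–Penrose pseudo-inverse. For $\mathsf{X}\in\{\mathsf{\Sigma},\mathsf{\Lambda}\}$ with $N_x$ columns, fix an SVD $\mathsf{X}=\mathsf{U}_X\mathsf{S}_X\mathsf{V}_X^{\mathrm T}$ with $\mathsf{V}_X$ orthogonal $N_x\times N_x$ and singular values $\sigma_{X,1}\ge\dots\ge\sigma_{X,N_x}\ge0$, so $\mathsf{X}^{\mathrm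 T}\mathsf{X}=\mathsf{V}_X\mathrm{diag}(\sigma_{X,i}^2)\mathsf{V}_X^{\mathrm T}$. For $1\le n\le N_x$, $\mathsf{L}_{X,n}$ is diagonal with $[\mathsf{L}_{X,n}]_{ii}=\sigma_{X,i}$ if $i>N_x-n$ and $0$ otherwise, and $(\mathsf{X}^{\mathrm T}\mathsf{X})_n=\mathsf{V}_X\mathsf{L}_{X,n}^2\mathsf{V}_X^{\mathrm T}$. *)

theory Defs
  imports "Jordan_Normal_Form.Matrix"
begin

text \<open>Matrices are Jordan_Normal_Form matrices with explicit dimensions; indices
  are 0-based (paper index i corresponds to i-1 here).\<close>

definition pinv :: "real mat \<Rightarrow> real mat" where
  "pinv A = (THE B. B \<in> carrier_mat (dim_col A) (dim_row A) \<and>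
       A * B * A = A \<and> B * A * B = B \<and>
       transpose_mat (A * B) = A * B \<and> transpose_mat (B * A) = B * A)"

definition orthogonal_mat :: "nat \<Rightarrow> real mat \<Rightarrow> bool" where
  "orthogonal_mat k V \<longleftrightarrow> V \<in> carrier_mat k k \<and>
     transpose_mat V * V = 1\<^sub>m k \<and> V * transpose_mat V = 1\<^sub>m k"

definition is_svd :: "nat \<Rightarrow> nat \<Rightarrow> real mat \<Rightarrow> real mat \<Rightarrow> real mat \<Rightarrow> real mat
      \<Rightarrow> (nat \<Rightarrow> real) \<Rightarrow> bool" where
  "is_svd N k X U S V \<sigma> \<longleftrightarrow>
     X \<in> carrier_mat N k \<and> orthogonal_mat N U \<and> orthogonal_mat k V \<and>
     S = mat N k (\<lambda>(i, j). if i = j then \<sigma> i else 0) \<and>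
     (\<forall>i < k. 0 \<le> \<sigma> i) \<and> (\<forall>i j. i \<le> j \<and> j < k \<longrightarrow> \<sigma> j \<le> \<sigma> i) \<and>
     (\<forall>i. N \<le> i \<and> i < k \<longrightarrow> \<sigma> i = 0) \<and>
     X = U * S * transpose_mat V"

definition Lmat :: "nat \<Rightarrow> (nat \<Rightarrow> real) \<Rightarrow> nat \<Rightarrow> real mat" where
  "Lmat k \<sigma> n = mat k k (\<lambda>(i, j). if i = j \<and> k - n \<le> i then \<sigma> i else 0)"

definition gram_n :: "nat \<Rightarrow> real mat \<Rightarrow> (nat \<Rightarrow> real) \<Rightarrow> nat \<Rightarrow> real mat" where
  "gram_n k V \<sigma> n = V * (Lmat k \<sigma> n * Lmat k \<sigma> n) * transpose_mat V"

definition qh_proj :: "real mat \<Rightarrow> real mat" where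
  "qh_proj X = X * pinv (transpose_mat X * X) * transpose_mat X"

definition qh_filter :: "nat \<Rightarrow> real mat \<Rightarrow> real mat \<Rightarrow> (nat \<Rightarrow> real) \<Rightarrow> nat \<Rightarrow> real mat" where
  "qh_filter k X V \<sigma> n = X * pinv (gram_n k V \<sigma> n) * transpose_mat X"

definition star_matrix :: "nat \<Rightarrow> nat \<Rightarrow> real mat \<Rightarrow> bool" where
  "star_matrix N NS Sig \<longleftrightarrow> Sig \<in> carrier_mat N NS \<and>
     (\<forall>m < N. \<exists>cp cm. cp < NS \<and> cm < NS \<and> cp \<noteq> cm \<and>
        (\<forall>c < NS. Sig $$ (m, c) = (if c = cp then 1 else if c = cm then -1 else 0))) \<and>
     (\<forall>c < NS. card {m. m < N \<and> Sig $$ (m, c) \<noteq> 0} = 3)"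

definition loop_matrix :: "nat \<Rightarrow> nat \<Rightarrow> real mat \<Rightarrow> bool" where
  "loop_matrix N NL Lam \<longleftrightarrow> Lam \<in> carrier_mat N NL \<and>
     (\<forall>m < N. \<exists>a b. a < NL \<and> b < NL \<and> a \<noteq> b \<and>
        (\<forall>v < NL. Lam $$ (m, v) = (if v = a then 1 else if v = b then -1 else 0)))"

definition mesh_matrices :: "nat \<Rightarrow> nat \<Rightarrow> nat \<Rightarrow> real mat \<Rightarrow> real mat \<Rightarrow> bool" where
  "mesh_matrices N NS NL Sig Lam \<longleftrightarrow> star_matrix N NS Sig \<and> loop_matrix N NL Lam \<and>
     transpose_mat Sig * Lam = 0\<^sub>m NS NL"

end

theory Submission
  imports Defs
begin

lemma pinv_unique:
  fixes A B C :: "real mat"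
  assumes A: "A \<in> carrier_mat k k" and B: "B \<in> carrier_mat k k" and C: "C \<in> carrier_mat k k"
  and b1: "A * B * A = A" and b2: "B * A * B = B" and b3: "transpose_mat (A * B) = A * B" and b4: "transpose_mat (B * A) = B * A"
  and c1: "A * C * A = A" and c2: "C * A * C = C" and c3: "transpose_mat (A * C) = A * C" and c4: "transpose_mat (C * A) = C * A"
  shows "B = C"
proof -
  have T: "transpose_mat A \<in> carrier_mat k k" "transpose_mat B \<in> carrier_mat k k" "transpose_mat C \<in> carrier_mat k k"
    using A B C by auto
  note T[simp]
  have "B = B * (A * B)" using b2 A B by simp
  also have "\<dots> = B * transpose_mat (A * B)" using b3 by simp
  also have "\<dots> = B * (transpose_mat B * transpose_mat A)" using A B by (simp add: transpose_mult[of _ k k _ k] assoc_mult_mat[of _ k k _ k _ k] T)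
  also have "transpose_mat A = transpose_mat (A * C * A)" using c1 by simp
  also have "\<dots> = transpose_mat A * transpose_mat (A * C)" using A C by (simp add: transpose_mult[of _ k k _ k] assoc_mult_mat[of _ k k _ k _ k] T)
  also have "B * (transpose_mat B * (transpose_mat A * transpose_mat (A * C))) = B * (transpose_mat (A * B) * (A * C))"
    using A B C c3 by (simp add: transpose_mult[of _ k k _ k] assoc_mult_mat[of _ k k _ k _ k] T)
  also have "\<dots> = (B * A * B) * (A * C)" using A B C b3 by (simp add: assoc_mult_mat[of _ k k _ k _ k] T)
  also have "\<dots> = B * A * C" using A B C b2 by simp
  finally have eB: "B = B * A * C" .
  have "C = (C * A) * C" using c2 by simp
  also have "\<dots> = transpose_mat (C * A) * C" using c4 by simp
  also have "\<dots> = transpose_mat A * transpose_mat C * C" using A C by (simp add: transpose_mult[of _ k k _ k] assoc_mult_mat[of _ k k _ k _ k] T)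
  also have "transpose_mat A = transpose_mat (A * B * A)" using b1 by simp
  also have "\<dots> = transpose_mat (B * A) * transpose_mat A" using A B by (simp add: transpose_mult[of _ k k _ k] assoc_mult_mat[of _ k k _ k _ k] T)
  also have "transpose_mat (B * A) * transpose_mat A * transpose_mat C * C = (B * A) * transpose_mat (C * A) * C"
    using A B C b4 by (simp add: transpose_mult[of _ k k _ k] assoc_mult_mat[of _ k k _ k _ k] T)
  also have "\<dots> = B * A * (C * A * C)" using A B C c4 by (simp add: assoc_mult_mat[of _ k k _ k _ k] T)
  also have "\<dots> = B * A * C" using c2 by simp
  finally show ?thesis using eB by simp
qed

lemma pinv_eqI:
  fixes A B :: "real mat"
  assumes A: "A \<in> carrier_mat k k" and B: "B \<in> carrier_mat k k"
  and b1: "A * B * A = A" and b2: "B * A * B = B" and b3: "transpose_mat (A * B) = A * B" and b4: "transpose_mat (B * A) = B * A"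
  shows "pinv A = B"
  unfolding pinv_def
proof (rule the_equality)
  show "B \<in> carrier_mat (dim_col A) (dim_row A) \<and> A * B * A = A \<and> B * A * B = B \<and>
       transpose_mat (A * B) = A * B \<and> transpose_mat (B * A) = B * A" using assms by auto
  fix C assume "C \<in> carrier_mat (dim_col A) (dim_row A) \<and> A * C * A = A \<and> C * A * C = C \<and>
       transpose_mat (A * C) = A * C \<and> transpose_mat (C * A) = C * A"
  then show "C = B" using pinv_unique[OF A B, of C] assms by auto
qed

definition rdg :: "nat \<Rightarrow> nat \<Rightarrow> (nat \<Rightarrow> real) \<Rightarrow> real mat" where
  "rdg r c f = mat r c (\<lambda>(i,j). if i = j then f i else 0)"

lemma rdg_carrier[simp]: "rdg r c f \<in> carrier_mat r c"
  by (simp add: rdg_def)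

lemma rdg_dims[simp]: "dim_row (rdg r c f) = r" "dim_col (rdg r c f) = c"
  by (simp_all add: rdg_def)

lemma rdg_mult: "rdg a b f * rdg b c g = rdg a c (\<lambda>i. if i < b then f i * g i else 0)"
proof (rule eq_matI)
  fix i j assume i: "i < dim_row (rdg a c (\<lambda>i. if i < b then f i * g i else 0))"
    and j: "j < dim_col (rdg a c (\<lambda>i. if i < b then f i * g i else 0))"
  have "(rdg a b f * rdg b c g) $$ (i, j) = (\<Sum>l\<in>{0..<b}. (if i = l then f i else 0) * (if l = j then g l else 0))"
    using i j by (simp add: rdg_def scalar_prod_def)
  also have "\<dots> = (\<Sum>l\<in>{0..<b}. if l = i then (if i = j then f i * g i else 0) else 0)"
    by (rule sum.cong) auto
  also have "\<dots> = rdg a c (\<lambda>i. if i < b then f i * g i else 0) $$ (i, j)"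
    using i j by (simp add: rdg_def)
  finally show "(rdg a b f * rdg b c g) $$ (i, j) = rdg a c (\<lambda>i. if i < b then f i * g i else 0) $$ (i, j)" .
qed auto

lemma rdg_transpose[simp]: "transpose_mat (rdg r c f) = rdg c r f"
  by (rule eq_matI) (auto simp: rdg_def)

lemma rdg_minus: "rdg r c f - rdg r c g = rdg r c (\<lambda>i. f i - g i)"
  by (rule eq_matI) (auto simp: rdg_def)

lemma rdg_cong: "(\<And>i. i < r \<Longrightarrow> i < c \<Longrightarrow> f i = g i) \<Longrightarrow> rdg r c f = rdg r c g"
  by (rule eq_matI) (auto simp: rdg_def)

lemma rdg_zero: "rdg r c (\<lambda>i. 0) = 0\<^sub>m r c"
  by (rule eq_matI) (auto simp: rdg_def)

lemma mult_carrier_iff[simp]: "(A * B \<in> carrier_mat r c) = (dim_row A = r \<and> dim_col B = c)"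
  unfolding carrier_mat_def by simp

lemma conj_mult:
  assumes V: "V \<in> carrier_mat k k" and W: "W \<in> carrier_mat k k" and WV: "W * V = 1\<^sub>m k"
  shows "(V * rdg k k f * W) * (V * rdg k k g * W) = V * rdg k k (\<lambda>i. f i * g i) * W"
proof -
  have "(V * rdg k k f * W) * (V * rdg k k g * W) = V * (rdg k k f * ((W * V) * (rdg k k g * W)))"
    using V W by (simp add: assoc_mult_mat[of _ k k _ k _ k])
  also have "\<dots> = V * (rdg k k f * rdg k k g) * W"
    using V W WV by (simp add: assoc_mult_mat[of _ k k _ k _ k])
  also have "rdg k k f * rdg k k g = rdg k k (\<lambda>i. f i * g i)"
    by (simp add: rdg_mult cong: rdg_cong)
  finally show ?thesis .
qed

lemma conj_transpose:
  assumes V: "V \<in> carrier_mat k k"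
  shows "transpose_mat (V * rdg k k f * transpose_mat V) = V * rdg k k f * transpose_mat V"
  using V by (simp add: transpose_mult[of _ k k _ k] assoc_mult_mat[of _ k k _ k _ k])

lemma pinv_conj:
  assumes orth: "orthogonal_mat k V"
    and dp: "\<And>i. i < k \<Longrightarrow> d i * p i * d i = d i \<and> p i * d i * p i = p i"
  shows "pinv (V * rdg k k d * transpose_mat V) = V * rdg k k p * transpose_mat V"
proof -
  define W where "W = transpose_mat V"
  have V: "V \<in> carrier_mat k k" and W: "W \<in> carrier_mat k k" and WV: "W * V = 1\<^sub>m k"
    using orth by (auto simp: orthogonal_mat_def W_def)
  have cm: "\<And>f g. (V * rdg k k f * W) * (V * rdg k k g * W) = V * rdg k k (\<lambda>i. f i * g i) * W"
    by (rule conj_mult[OF V W WV])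
  have ct: "\<And>f. transpose_mat (V * rdg k k f * W) = V * rdg k k f * W"
    unfolding W_def by (rule conj_transpose[OF V])
  have e1: "rdg k k (\<lambda>i. d i * p i * d i) = rdg k k d" by (rule rdg_cong) (use dp in auto)
  have e2: "rdg k k (\<lambda>i. p i * d i * p i) = rdg k k p" by (rule rdg_cong) (use dp in auto)
  show ?thesis unfolding W_def[symmetric]
  proof (rule pinv_eqI[of _ k])
    show "V * rdg k k d * W \<in> carrier_mat k k" using V W by simp
    show "V * rdg k k p * W \<in> carrier_mat k k" using V W by simp
    show "V * rdg k k d * W * (V * rdg k k p * W) * (V * rdg k k d * W) = V * rdg k k d * W"
      by (simp add: cm e1)
    show "V * rdg k k p * W * (V * rdg k k d * W) * (V * rdg k k p * W) = V * rdg k k p * W"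
      by (simp add: cm e2)
    show "transpose_mat (V * rdg k k d * W * (V * rdg k k p * W)) = V * rdg k k d * W * (V * rdg k k p * W)"
      by (simp add: cm ct)
    show "transpose_mat (V * rdg k k p * W * (V * rdg k k d * W)) = V * rdg k k p * W * (V * rdg k k d * W)"
      by (simp add: cm ct)
  qed
qed

lemma filter_eq:
  assumes svd: "is_svd N k X U S V \<sigma>"
  shows "qh_filter k X V \<sigma> n = U * rdg N N (\<lambda>i. if i < k \<and> k - n \<le> i \<and> \<sigma> i \<noteq> 0 then 1 else 0) * transpose_mat U"
proof -
  have oU: "orthogonal_mat N U" and oV: "orthogonal_mat k V" and XU: "X = U * S * transpose_mat V"
    and Sd: "S = mat N k (\<lambda>(i, j). if i = j then \<sigma> i else 0)"
    using svd by (auto simp: is_svd_def)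
  have S: "S = rdg N k \<sigma>" unfolding Sd rdg_def ..
  define l where "l i = (if k - n \<le> i then \<sigma> i else 0)" for i
  define p where "p i = (if k - n \<le> i \<and> \<sigma> i \<noteq> 0 then 1 / (\<sigma> i)^2 else 0)" for i
  have L: "Lmat k \<sigma> n = rdg k k l" by (rule eq_matI) (auto simp: Lmat_def rdg_def l_def)
  have LL: "Lmat k \<sigma> n * Lmat k \<sigma> n = rdg k k (\<lambda>i. l i * l i)"
    by (simp add: L rdg_mult cong: rdg_cong)
  have pv: "pinv (gram_n k V \<sigma> n) = V * rdg k k p * transpose_mat V"
    unfolding gram_n_def LL by (rule pinv_conj[OF oV]) (auto simp: l_def p_def field_simps power2_eq_square)
  define W where "W = transpose_mat V"
  define Ut where "Ut = transpose_mat U"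
  have dU: "dim_row U = N" "dim_col U = N" "dim_row Ut = N" "dim_col Ut = N"
    using oU by (auto simp: orthogonal_mat_def Ut_def)
  have dV: "dim_row V = k" "dim_col V = k" "dim_row W = k" "dim_col W = k" and WV: "W * V = 1\<^sub>m k"
    using oV by (auto simp: orthogonal_mat_def W_def)
  have cc: "U \<in> carrier_mat N N" "Ut \<in> carrier_mat N N" "V \<in> carrier_mat k k" "W \<in> carrier_mat k k"
    using dU dV by (simp_all only: carrier_mat_def mem_Collect_eq)
  have XT: "transpose_mat X = V * rdg k N \<sigma> * Ut"
  proof -
    have c1: "U * rdg N k \<sigma> \<in> carrier_mat N k" using dU by (simp only: mult_carrier_iff rdg_dims)
    have c2: "W \<in> carrier_mat k k" using dV by (simp only: carrier_mat_def mem_Collect_eq)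
    have c3: "U \<in> carrier_mat N N" using dU by (simp only: carrier_mat_def mem_Collect_eq)
    have "transpose_mat X = transpose_mat W * transpose_mat (U * rdg N k \<sigma>)"
      unfolding XU S W_def[symmetric] by (rule transpose_mult[OF c1 c2])
    also have "transpose_mat (U * rdg N k \<sigma>) = rdg k N \<sigma> * Ut"
      unfolding Ut_def by (rule transpose_mult[OF c3 rdg_carrier, simplified])
    also have "transpose_mat W = V" unfolding W_def by simp
    also have "V * (rdg k N \<sigma> * Ut) = V * rdg k N \<sigma> * Ut"
      by (rule assoc_mult_mat[symmetric, of _ k k _ N _ N]) (use dU dV cc in simp_all)
    finally show ?thesis .
  qed
  have "qh_filter k X V \<sigma> n = U * rdg N k \<sigma> * W * (V * rdg k k p * W) * (V * rdg k N \<sigma> * Ut)"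
    unfolding qh_filter_def pv XT unfolding XU S W_def ..
  also have "\<dots> = U * (rdg N k \<sigma> * ((W * V) * (rdg k k p * ((W * V) * (rdg k N \<sigma> * Ut)))))"
    using dU dV cc by (simp add: assoc_mult_mat[of _ N N _ k _ N] assoc_mult_mat[of _ k k _ k _ N] assoc_mult_mat[of _ k k _ N _ N] assoc_mult_mat[of _ N k _ k _ N] assoc_mult_mat[of _ N k _ N _ N] assoc_mult_mat[of _ N N _ N _ N] assoc_mult_mat[of _ k k _ k _ k])
  also have "\<dots> = U * (rdg N k \<sigma> * rdg k k p * rdg k N \<sigma>) * Ut"
    using dU dV cc WV by (simp add: assoc_mult_mat[of _ N N _ k _ N] assoc_mult_mat[of _ k k _ k _ N] assoc_mult_mat[of _ k k _ N _ N] assoc_mult_mat[of _ N k _ k _ N] assoc_mult_mat[of _ N k _ N _ N] assoc_mult_mat[of _ N N _ N _ N] assoc_mult_mat[of _ k k _ k _ k])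
  also have "rdg N k \<sigma> * rdg k k p * rdg k N \<sigma> = rdg N N (\<lambda>i. if i < k \<and> k - n \<le> i \<and> \<sigma> i \<noteq> 0 then 1 else 0)"
    by (auto simp: rdg_mult p_def power2_eq_square intro!: rdg_cong)
  finally show ?thesis unfolding Ut_def .
qed

lemma conj_minus:
  assumes U: "U \<in> carrier_mat N N" and W: "W \<in> carrier_mat N N"
  shows "U * rdg N N f * W - U * rdg N N g * W = U * rdg N N (\<lambda>i. f i - g i) * W"
proof -
  have "U * rdg N N f * W - U * rdg N N g * W = (U * rdg N N f - U * rdg N N g) * W"
    by (rule minus_mult_distrib_mat[of _ N N _ _ N, symmetric]) (use U W in simp_all)
  also have "U * rdg N N f - U * rdg N N g = U * (rdg N N f - rdg N N g)"
    by (rule mult_minus_distrib_mat[of _ N N _ N, symmetric]) (use U in simp_all)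
  finally show ?thesis by (simp add: rdg_minus)
qed

lemma filt_diff:
  assumes svd: "is_svd N k X U S V \<sigma>" and mn: "m \<le> n" and np: "n \<le> p" and pq: "p \<le> q"
  shows "(qh_filter k X V \<sigma> m - qh_filter k X V \<sigma> n) * (qh_filter k X V \<sigma> p - qh_filter k X V \<sigma> q) = 0\<^sub>m N N"
proof -
  define e where "e n i = (if i < k \<and> k - n \<le> i \<and> \<sigma> i \<noteq> 0 then 1 else (0::real))" for n i
  define Ut where "Ut = transpose_mat U"
  have oU: "orthogonal_mat N U" using svd by (auto simp: is_svd_def)
  have cU: "U \<in> carrier_mat N N" "Ut \<in> carrier_mat N N" and UU: "Ut * U = 1\<^sub>m N"
    using oU by (auto simp: orthogonal_mat_def Ut_def)
  have F: "qh_filter k X V \<sigma> r = U * rdg N N (e r) * Ut" for r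
    unfolding filter_eq[OF svd] e_def Ut_def ..
  have "(qh_filter k X V \<sigma> m - qh_filter k X V \<sigma> n) * (qh_filter k X V \<sigma> p - qh_filter k X V \<sigma> q)
      = (U * rdg N N (\<lambda>i. e m i - e n i) * Ut) * (U * rdg N N (\<lambda>i. e p i - e q i) * Ut)"
    unfolding F conj_minus[OF cU] ..
  also have "\<dots> = U * rdg N N (\<lambda>i. (e m i - e n i) * (e p i - e q i)) * Ut"
    by (rule conj_mult[OF cU UU])
  also have "rdg N N (\<lambda>i. (e m i - e n i) * (e p i - e q i)) = rdg N N (\<lambda>i. 0)"
  proof (rule rdg_cong)
    fix i
    show "(e m i - e n i) * (e p i - e q i) = 0"
    proof (cases "k - n \<le> i")
      case True
      then have "k - p \<le> i" "k - q \<le> i" using np pq by auto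
      then have "e p i = e q i" by (simp add: e_def)
      then show ?thesis by simp
    next
      case False
      then have "\<not> k - m \<le> i" using mn by auto
      then have "e m i = e n i" using False by (simp add: e_def)
      then show ?thesis by simp
    qed
  qed
  also have "U * rdg N N (\<lambda>i. 0) * Ut = 0\<^sub>m N N"
    using cU by (simp add: rdg_zero)
  finally show ?thesis .
qed

lemma filt_carrier: "X \<in> carrier_mat N k \<Longrightarrow> qh_filter k X V \<sigma> n \<in> carrier_mat N N"
  unfolding qh_filter_def by (drule carrier_matD) simp

lemma proj_carrier: "X \<in> carrier_mat N k \<Longrightarrow> qh_proj X \<in> carrier_mat N N"
  unfolding qh_proj_def by (drule carrier_matD) simp

lemma cancel4:
  fixes A B I P Q :: "real mat"
  assumes "A \<in> carrier_mat N N" "B \<in> carrier_mat N N" "I \<in> carrier_mat N N" "P \<in> carrier_mat N N" "Q \<in> carrier_mat N N"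
  shows "(A + I - P - Q) - (B + I - P - Q) = A - B"
  using assms by (intro eq_matI) auto

theorem mainTheorem6:
  fixes N NS NL :: nat and Sig Lam US SS VS UL SL VL :: "real mat"
    and \<sigma>S \<sigma>L :: "nat \<Rightarrow> real"
  assumes mesh: "mesh_matrices N NS NL Sig Lam"
    and svdS: "is_svd N NS Sig US SS VS \<sigma>S"
    and svdL: "is_svd N NL Lam UL SL VL \<sigma>L"
  defines "PSn \<equiv> qh_filter NS Sig VS \<sigma>S" and "PLn \<equiv> qh_filter NL Lam VL \<sigma>L"
    and "PLH \<equiv> (\<lambda>n. qh_filter NL Lam VL \<sigma>L n + 1\<^sub>m N - qh_proj Sig - qh_proj Lam)"
    and "PSH \<equiv> (\<lambda>n. qh_filter NS Sig VS \<sigma>S n + 1\<^sub>m N - qh_proj Lam - qh_proj Sig)"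
  shows "(\<forall>m n p q. 1 \<le> m \<and> m < n \<and> n < p \<and> p < q \<and> q \<le> NS \<longrightarrow>
            (PSn m - PSn n) * (PSn p - PSn q) = 0\<^sub>m N N \<and>
            (PSH m - PSH n) * (PSH p - PSH q) = 0\<^sub>m N N) \<and>
         (\<forall>m n p q. 1 \<le> m \<and> m < n \<and> n < p \<and> p < q \<and> q \<le> NL \<longrightarrow>
            (PLn m - PLn n) * (PLn p - PLn q) = 0\<^sub>m N N \<and>
            (PLH m - PLH n) * (PLH p - PLH q) = 0\<^sub>m N N)"
proof -
  have cS: "Sig \<in> carrier_mat N NS" using svdS unfolding is_svd_def by blast
  have cL: "Lam \<in> carrier_mat N NL" using svdL unfolding is_svd_def by blast
  have cI: "1\<^sub>m N \<in> carrier_mat N N" by simp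
  note pS = proj_carrier[OF cS] and pL = proj_carrier[OF cL]
  have hS: "PSH a - PSH b = PSn a - PSn b" for a b
    unfolding PSH_def PSn_def
    by (rule cancel4[OF filt_carrier[OF cS] filt_carrier[OF cS] cI pL pS])
  have hL: "PLH a - PLH b = PLn a - PLn b" for a b
    unfolding PLH_def PLn_def
    by (rule cancel4[OF filt_carrier[OF cL] filt_carrier[OF cL] cI pS pL])
  have dS: "(PSn m - PSn n) * (PSn p - PSn q) = 0\<^sub>m N N" if "m \<le> n" "n \<le> p" "p \<le> q" for m n p q
    unfolding PSn_def by (rule filt_diff[OF svdS that])
  have dL: "(PLn m - PLn n) * (PLn p - PLn q) = 0\<^sub>m N N" if "m \<le> n" "n \<le> p" "p \<le> q" for m n p q
    unfolding PLn_def by (rule filt_diff[OF svdL that])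
  show ?thesis
    using dS dL unfolding hS hL by (meson less_imp_le)
qed

end
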